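(* Let $T$ be a tree with exactly three pendant vertices and a single major vertex $m$. Then $1$ is an eigenvalue of $L(T)$ of multiplicity exactly one if and only if the pendant vertices can be labelled $u_1,u_2,u_3$ so that either (A) $d(u_1,m)\equiv d(u_2,m)\equiv 1\pmod 3$ and $d(u_3,m)\not\equiv 1\pmod 3$; or (B) $d(u_1,m)\equiv 2$, $d(u_2,m)\equiv 0$ and $d(u_3,m)\equiv 0\pmod 3$.
   Context: $L(T)=D(T)-A(T)$ is the Laplacian matrix of $T$. A pendant vertex has degree $1$; a major vertex has degree at least $3$. $d$ denotes distance. *)

theory Defs
  imports "Jordan_Normal_Form.Char_Poly"
begin

definition simple_graph :: "nat \<Rightarrow> (nat \<Rightarrow> nat \<Rightarrow> bool) \<Rightarrow> bool" where
  "simple_graph n E \<longleftrightarrow> (\<forall>i j. E i j \<longrightarrow> i < n \<and> j < n) \<and>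
     (\<forall>i j. E i j \<longrightarrow> E j i) \<and> (\<forall>i. \<not> E i i)"

definition walk :: "(nat \<Rightarrow> nat \<Rightarrow> bool) \<Rightarrow> nat list \<Rightarrow> bool" where
  "walk E xs \<longleftrightarrow> xs \<noteq> [] \<and> (\<forall>k. Suc k < length xs \<longrightarrow> E (xs ! k) (xs ! Suc k))"

definition connected_graph :: "nat \<Rightarrow> (nat \<Rightarrow> nat \<Rightarrow> bool) \<Rightarrow> bool" where
  "connected_graph n E \<longleftrightarrow> (\<forall>u v. u < n \<and> v < n \<longrightarrow>
      (\<exists>xs. walk E xs \<and> hd xs = u \<and> last xs = v))"

definition has_cycle :: "(nat \<Rightarrow> nat \<Rightarrow> bool) \<Rightarrow> bool" where
  "has_cycle E \<longleftrightarrow> (\<exists>xs. length xs \<ge> 3 \<and> distinct xs \<and> walk E xs \<and> E (last xs) (hd xs))"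

definition is_tree :: "nat \<Rightarrow> (nat \<Rightarrow> nat \<Rightarrow> bool) \<Rightarrow> bool" where
  "is_tree n E \<longleftrightarrow> n \<ge> 1 \<and> simple_graph n E \<and> connected_graph n E \<and> \<not> has_cycle E"

definition degree :: "nat \<Rightarrow> (nat \<Rightarrow> nat \<Rightarrow> bool) \<Rightarrow> nat \<Rightarrow> nat" where
  "degree n E i = card {j. j < n \<and> E i j}"

definition pendant_vertices :: "nat \<Rightarrow> (nat \<Rightarrow> nat \<Rightarrow> bool) \<Rightarrow> nat set" where
  "pendant_vertices n E = {i. i < n \<and> degree n E i = 1}"

definition major_vertices :: "nat \<Rightarrow> (nat \<Rightarrow> nat \<Rightarrow> bool) \<Rightarrow> nat set" where
  "major_vertices n E = {i. i < n \<and> degree n E i \<ge> 3}"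

definition graph_dist :: "(nat \<Rightarrow> nat \<Rightarrow> bool) \<Rightarrow> nat \<Rightarrow> nat \<Rightarrow> nat" where
  "graph_dist E u v = (LEAST k. \<exists>xs. walk E xs \<and> hd xs = u \<and> last xs = v \<and> length xs = Suc k)"

definition laplacian :: "nat \<Rightarrow> (nat \<Rightarrow> nat \<Rightarrow> bool) \<Rightarrow> real mat" where
  "laplacian n E = mat n n (\<lambda>(i, j). (if i = j then real (degree n E i) else 0)
                                      - (if E i j then 1 else 0))"

definition eig_multiplicity :: "real mat \<Rightarrow> real \<Rightarrow> nat" where
  "eig_multiplicity A c = order c (char_poly A)"

end

theory Submission
  imports Defs "Jordan_Normal_Form.Jordan_Normal_Form_Existence" "Jordan_Normal_Form.Jordan_Normal_Form_Uniqueness"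
begin

lemma sum_list_min_aux:
  fixes xs :: "nat list"
  assumes "sum_list (map (min 2) xs) = sum_list (map (min 1) xs)"
  shows "sum_list xs = sum_list (map (min 1) xs)"
  using assms
proof (induction xs)
  case Nil then show ?case by simp
next
  case (Cons a xs)
  have "sum_list (map (min 2) xs) \<ge> sum_list (map (min 1) xs)"
    by (induction xs) (auto intro: add_mono)
  with Cons.prems have "min 2 a = min 1 a" "sum_list (map (min 2) xs) = sum_list (map (min 1) xs)"
    by auto
  with Cons.IH show ?case by auto
qed


lemma real_sym_kernel_sq:
  fixes M :: "complex mat"
  assumes M: "M \<in> carrier_mat n n"
    and sym: "\<And>i j. i < n \<Longrightarrow> j < n \<Longrightarrow> M $$ (i,j) = M $$ (j,i)"
    and re: "\<And>i j. i < n \<Longrightarrow> j < n \<Longrightarrow> cnj (M $$ (i,j)) = M $$ (i,j)"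
    and v: "v \<in> carrier_vec n" and MMv: "M *\<^sub>v (M *\<^sub>v v) = 0\<^sub>v n"
  shows "M *\<^sub>v v = 0\<^sub>v n"
proof -
  define w where "w = M *\<^sub>v v"
  have w: "w \<in> carrier_vec n" unfolding w_def using M v by auto
  have wi: "w $ i = (\<Sum>j<n. M $$ (i,j) * v $ j)" if "i < n" for i
    unfolding w_def using M v that by (auto simp: scalar_prod_def row_def lessThan_atLeast0)
  have Mw: "(\<Sum>i<n. M $$ (j,i) * w $ i) = 0" if "j < n" for j
  proof -
    have "(M *\<^sub>v w) $ j = 0" using MMv that M unfolding w_def by simp
    thus ?thesis using M w that by (auto simp: scalar_prod_def row_def lessThan_atLeast0)
  qed
  have "(\<Sum>i<n. w $ i * cnj (w $ i)) = (\<Sum>i<n. \<Sum>j<n. M $$ (i,j) * v $ j * cnj (w $ i))"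
    by (simp add: wi sum_distrib_right)
  also have "\<dots> = (\<Sum>j<n. \<Sum>i<n. M $$ (i,j) * v $ j * cnj (w $ i))"
    by (rule sum.swap)
  also have "\<dots> = (\<Sum>j<n. v $ j * cnj (\<Sum>i<n. M $$ (j,i) * w $ i))"
  proof (rule sum.cong[OF refl])
    fix j assume j: "j \<in> {..<n}"
    have "v $ j * cnj (\<Sum>i<n. M $$ (j,i) * w $ i) = (\<Sum>i<n. v $ j * (cnj (M $$ (j,i)) * cnj (w $ i)))"
      by (simp add: cnj_sum sum_distrib_left)
    also have "\<dots> = (\<Sum>i<n. M $$ (i,j) * v $ j * cnj (w $ i))"
    proof (rule sum.cong[OF refl])
      fix i assume i: "i \<in> {..<n}"
      have "cnj (M $$ (j,i)) = M $$ (i,j)" using re[of j i] sym[of j i] i j by simp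
      thus "v $ j * (cnj (M $$ (j,i)) * cnj (w $ i)) = M $$ (i,j) * v $ j * cnj (w $ i)" by simp
    qed
    finally show "(\<Sum>i<n. M $$ (i,j) * v $ j * cnj (w $ i)) = v $ j * cnj (\<Sum>i<n. M $$ (j,i) * w $ i)" by simp
  qed
  also have "\<dots> = 0" using Mw by simp
  finally have S: "(\<Sum>i<n. w $ i * cnj (w $ i)) = 0" .
  have "(\<Sum>i<n. w $ i * cnj (w $ i)) = of_real (\<Sum>i<n. (cmod (w $ i))^2)"
    by (simp add: complex_norm_square del: of_real_power)
  with S have "(\<Sum>i<n. (cmod (w $ i))^2) = 0" by (metis of_real_eq_0_iff)
  hence "\<forall>i\<in>{..<n}. (cmod (w $ i))^2 = 0"
    using sum_nonneg_eq_0_iff[of "{..<n}" "\<lambda>i. (cmod (w $ i))^2"] by auto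
  hence "w $ i = 0" if "i < n" for i using that by auto
  thus ?thesis using w unfolding w_def[symmetric] by (intro eq_vecI) auto
qed


lemma kernel_dim_cong:
  assumes "mat_kernel A = mat_kernel B" "dim_col A = dim_col B"
  shows "kernel_dim A = kernel_dim B"
  using assms unfolding kernel_dim_def by simp

interpretation of_real_poly_hom2: map_poly_inj_idom_divide_hom "complex_of_real" ..

lemma order_char_poly_real_sym:
  fixes A :: "real mat"
  assumes A: "A \<in> carrier_mat n n"
    and sym: "\<And>i j. i < n \<Longrightarrow> j < n \<Longrightarrow> A $$ (i,j) = A $$ (j,i)"
  shows "Polynomial.order c (char_poly A) = kernel_dim (char_matrix (map_mat complex_of_real A) (complex_of_real c))"
proof -
  define B where "B = map_mat complex_of_real A"
  define c' where "c' = complex_of_real c"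
  have B: "B \<in> carrier_mat n n" unfolding B_def using A by auto
  have "Polynomial.order c (char_poly A) = Polynomial.order c' (map_poly complex_of_real (char_poly A))"
    unfolding c'_def by (rule of_real_poly_hom2.order_hom[symmetric])
  also have "map_poly complex_of_real (char_poly A) = char_poly B"
    unfolding B_def by (rule of_real_hom.char_poly_hom[symmetric, OF A])
  finally have ord: "Polynomial.order c (char_poly A) = Polynomial.order c' (char_poly B)" .
  obtain as where "char_poly B = (\<Prod> a \<leftarrow> as. [:- a, 1:])" using char_poly_factorized[OF B] by auto
  from jordan_nf_exists[OF B this] obtain n_as where jnf: "jordan_nf B n_as" by auto
  define xs where "xs = map fst [(n, e)\<leftarrow>n_as . e = c']"
  have o2: "Polynomial.order c' (char_poly B) = sum_list xs"
    unfolding jordan_nf_order[OF jnf] xs_def by (induction n_as) auto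
  have dk: "dim_gen_eigenspace B c' k = sum_list (map (min k) xs)" for k
    unfolding dim_gen_eigenspace[OF jnf] xs_def by simp
  define M where "M = char_matrix B c'"
  have M: "M \<in> carrier_mat n n" unfolding M_def using B by auto
  have M1: "M ^\<^sub>m 1 = M" using M by simp
  have M2: "M ^\<^sub>m 2 = M * M" using M by (simp add: numeral_2_eq_2)
  have Mij: "M $$ (i,j) = complex_of_real (A $$ (i,j) - (if i = j then c else 0))" if "i < n" "j < n" for i j
    using that A unfolding M_def B_def c'_def char_matrix_def by auto
  have ker: "mat_kernel (M ^\<^sub>m 2) = mat_kernel (M ^\<^sub>m 1)"
  proof -
    have MM: "M * M \<in> carrier_mat n n" using M by auto
    show ?thesis unfolding M1 M2
    proof (intro equalityI subsetI)
      fix v assume "v \<in> mat_kernel (M * M)"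
      hence v: "v \<in> carrier_vec n" and "(M * M) *\<^sub>v v = 0\<^sub>v n" using mat_kernelD[OF MM] by auto
      hence "M *\<^sub>v (M *\<^sub>v v) = 0\<^sub>v n" using M by (simp add: assoc_mult_mat_vec)
      moreover have "\<And>i j. i < n \<Longrightarrow> j < n \<Longrightarrow> M $$ (i,j) = M $$ (j,i)"
        using Mij sym by auto
      moreover have "\<And>i j. i < n \<Longrightarrow> j < n \<Longrightarrow> cnj (M $$ (i,j)) = M $$ (i,j)"
        using Mij by simp
      ultimately have "M *\<^sub>v v = 0\<^sub>v n"
        using real_sym_kernel_sq[OF M _ _ v] by blast
      thus "v \<in> mat_kernel M" using v M by (auto intro: mat_kernelI)
    next
      fix v assume "v \<in> mat_kernel M"
      hence v: "v \<in> carrier_vec n" and "M *\<^sub>v v = 0\<^sub>v n" using mat_kernelD[OF M] by auto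
      moreover have "M *\<^sub>v 0\<^sub>v n = 0\<^sub>v n" using M by (intro eq_vecI) auto
      ultimately have "(M * M) *\<^sub>v v = 0\<^sub>v n" using M v by (simp add: assoc_mult_mat_vec)
      thus "v \<in> mat_kernel (M * M)" using v MM by (auto intro: mat_kernelI)
    qed
  qed
  have "dim_gen_eigenspace B c' 2 = dim_gen_eigenspace B c' 1"
    unfolding dim_gen_eigenspace_def M_def[symmetric]
    by (rule kernel_dim_cong[OF ker]) (use M in auto)
  hence "sum_list (map (min 2) xs) = sum_list (map (min 1) xs)" unfolding dk .
  hence "sum_list xs = sum_list (map (min 1) xs)" by (rule sum_list_min_aux)
  also have "\<dots> = dim_gen_eigenspace B c' 1" unfolding dk ..
  also have "\<dots> = kernel_dim M" unfolding dim_gen_eigenspace_def M_def[symmetric] M1 ..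
  finally have "sum_list xs = kernel_dim M" .
  with ord o2 show ?thesis unfolding M_def B_def c'_def by simp
qed


context kernel
begin

lemma fin_dim_ker: "Ker.fin_dim"
proof -
  obtain B where "finite B" "basis B" using kernel_basis_exists[OF A] by auto
  thus ?thesis unfolding Ker.fin_dim_def Ker.basis_def by auto
qed

lemma dim_le_gen:
  assumes "finite S" "S \<subseteq> mat_kernel A" "mat_kernel A \<subseteq> span S"
  shows "dim \<le> card S"
proof -
  have "span S \<subseteq> mat_kernel A" using assms by (intro Ker.span_is_subset2) auto
  with assms have "span S = mat_kernel A" by auto
  with Ker.gen_ge_dim[OF assms(1,2)] show ?thesis by auto
qed

lemma dim_ge_li:
  assumes "S \<subseteq> mat_kernel A" "\<not> lin_dep S"
  shows "card S \<le> dim"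
  using Ker.li_le_dim[OF fin_dim_ker assms] by auto

lemma lin_dep_index:
  assumes "lin_dep S" "S \<subseteq> mat_kernel A"
  shows "\<exists>U a u. finite U \<and> U \<subseteq> S \<and> u \<in> U \<and> a u \<noteq> 0 \<and> (\<forall>i<nc. (\<Sum>x\<in>U. a x * x $ i) = 0)"
proof -
  from assms(1) obtain U a u where U: "finite U" "U \<subseteq> S" "lincomb a U = 0\<^sub>v nc" "u \<in> U" "a u \<noteq> 0"
    unfolding Ker.lin_dep_def by auto
  have "\<forall>i<nc. (\<Sum>x\<in>U. a x * x $ i) = 0"
  proof (intro allI impI)
    fix i assume i: "i < nc"
    have "lincomb a U $ i = (\<Sum>x\<in>U. a x * x $ i)" by (rule lincomb_index[OF i]) (use U assms(2) in auto)
    thus "(\<Sum>x\<in>U. a x * x $ i) = 0" using U(3) i by simp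
  qed
  with U show ?thesis by blast
qed

end

lemma kernel_dim_zero:
  fixes A :: "'a :: field mat"
  assumes A: "A \<in> carrier_mat n n"
    and z: "\<And>v. v \<in> carrier_vec n \<Longrightarrow> A *\<^sub>v v = 0\<^sub>v n \<Longrightarrow> v = 0\<^sub>v n"
  shows "kernel_dim A = 0"
proof -
  interpret kernel n n A by (unfold_locales, rule A)
  have "mat_kernel A \<subseteq> span {}"
  proof
    fix v assume "v \<in> mat_kernel A"
    hence "v = 0\<^sub>v n" using z mat_kernelD[OF A] by auto
    moreover have "0\<^sub>v n \<in> span {}" using Ker.span_is_submodule[of "{}"]
      by (metis Ker.zero_closed empty_subsetI submodule.subset Ker.span_zero)
    ultimately show "v \<in> span {}" by simp
  qed
  from dim_le_gen[OF _ _ this] have "dim \<le> 0" by auto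
  thus ?thesis using A by simp
qed


lemma kernel_dim_one:
  fixes A :: "'a :: field mat"
  assumes A: "A \<in> carrier_mat n n"
    and v: "v \<in> carrier_vec n" "A *\<^sub>v v = 0\<^sub>v n" and i: "i < n" "v $ i \<noteq> 0"
    and all: "\<And>w. w \<in> carrier_vec n \<Longrightarrow> A *\<^sub>v w = 0\<^sub>v n \<Longrightarrow> \<exists>c. w = c \<cdot>\<^sub>v v"
  shows "kernel_dim A = 1"
proof -
  interpret kernel n n A by (unfold_locales, rule A)
  have vk: "v \<in> mat_kernel A" using v A by (auto intro: mat_kernelI)
  have "mat_kernel A \<subseteq> span {v}"
  proof
    fix w assume "w \<in> mat_kernel A"
    then obtain c where w: "w = c \<cdot>\<^sub>v v" using all mat_kernelD[OF A] by blast
    have "lincomb (\<lambda>_. c) {v} = c \<cdot>\<^sub>v v"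
      unfolding Ker.lincomb_def using vk by simp
    hence "w = lincomb (\<lambda>_. c) {v}" using w by simp
    thus "w \<in> span {v}" unfolding Ker.span_def by blast
  qed
  from dim_le_gen[OF _ _ this] vk have le: "dim \<le> 1" by auto
  have "\<not> lin_dep {v}"
  proof
    assume "lin_dep {v}"
    from lin_dep_index[OF this] vk obtain U a u where
      U: "finite U" "U \<subseteq> {v}" "u \<in> U" "a u \<noteq> 0" "\<forall>i<n. (\<Sum>x\<in>U. a x * x $ i) = 0" by auto
    hence "U = {v}" "u = v" by auto
    with U(4,5) i show False by auto
  qed
  from dim_ge_li[OF _ this] vk have "1 \<le> dim" by auto
  with le show ?thesis using A by simp
qed

lemma kernel_dim_two:
  fixes A :: "'a :: field mat"
  assumes A: "A \<in> carrier_mat n n"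
    and v: "v \<in> carrier_vec n" "A *\<^sub>v v = 0\<^sub>v n"
    and w: "w \<in> carrier_vec n" "A *\<^sub>v w = 0\<^sub>v n"
    and ij: "i < n" "j < n" "v $ i \<noteq> 0" "w $ i = 0" "v $ j = 0" "w $ j \<noteq> 0"
  shows "kernel_dim A \<ge> 2"
proof -
  interpret kernel n n A by (unfold_locales, rule A)
  have vk: "v \<in> mat_kernel A" using v A by (auto intro: mat_kernelI)
  have wk: "w \<in> mat_kernel A" using w A by (auto intro: mat_kernelI)
  have vw: "v \<noteq> w" using ij by auto
  have "\<not> lin_dep {v, w}"
  proof
    assume "lin_dep {v, w}"
    from lin_dep_index[OF this] vk wk obtain U a u where
      U: "finite U" "U \<subseteq> {v, w}" "u \<in> U" "a u \<noteq> 0" "\<forall>i<n. (\<Sum>x\<in>U. a x * x $ i) = 0" by auto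
    have "U = {v} \<or> U = {w} \<or> U = {v, w}" using U(2,3) by auto
    moreover have "u = v \<or> u = w" using U by auto
    ultimately show False using U(3,4) U(5)[rule_format, OF ij(1)] U(5)[rule_format, OF ij(2)] ij vw
      by auto
  qed
  from dim_ge_li[OF _ this] vk wk vw have "2 \<le> dim" by auto
  thus ?thesis using A by simp
qed


definition nbrs :: "nat \<Rightarrow> (nat \<Rightarrow> nat \<Rightarrow> bool) \<Rightarrow> nat \<Rightarrow> nat set" where
  "nbrs n E v = {j. j < n \<and> E v j}"

lemma finite_nbrs[simp]: "finite (nbrs n E v)"
  unfolding nbrs_def by auto

lemma degree_nbrs: "degree n E v = card (nbrs n E v)"
  unfolding degree_def nbrs_def ..

fun seqw :: "(nat \<Rightarrow> nat \<Rightarrow> nat) \<Rightarrow> nat \<Rightarrow> nat \<Rightarrow> nat \<Rightarrow> nat" where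
  "seqw f a b 0 = a"
| "seqw f a b (Suc 0) = b"
| "seqw f a b (Suc (Suc k)) = f (seqw f a b k) (seqw f a b (Suc k))"

locale tctx =
  fixes n :: nat and E :: "nat \<Rightarrow> nat \<Rightarrow> bool" and m :: nat
  assumes sg: "simple_graph n E" and conn: "connected_graph n E" and acyc: "\<not> has_cycle E"
    and mn: "m < n" and degm: "degree n E m \<ge> 3"
    and degle: "\<And>v. v < n \<Longrightarrow> v \<noteq> m \<Longrightarrow> degree n E v \<le> 2"
begin

abbreviation "N \<equiv> nbrs n E"
abbreviation "deg \<equiv> degree n E"

lemma Eb: "E i j \<Longrightarrow> i < n \<and> j < n" using sg unfolding simple_graph_def by auto
lemma Esym: "E i j \<Longrightarrow> E j i" using sg unfolding simple_graph_def by auto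
lemma Eirr: "\<not> E i i" using sg unfolding simple_graph_def by auto

lemma N_iff: "j \<in> N v \<longleftrightarrow> E v j" unfolding nbrs_def using Eb by auto

lemma deg_pos: assumes "v < n" shows "deg v \<ge> 1"
proof (cases "v = m")
  case True thus ?thesis using degm by simp
next
  case False
  from conn assms mn obtain xs where xs: "walk E xs" "hd xs = v" "last xs = m"
    unfolding connected_graph_def by blast
  have "length xs \<noteq> 1" using xs False by (cases xs) auto
  moreover have "xs \<noteq> []" using xs unfolding walk_def by auto
  ultimately have "Suc 0 < length xs" by (cases xs) auto
  hence "E (xs ! 0) (xs ! 1)" using xs unfolding walk_def by auto
  moreover have "xs ! 0 = v" using xs \<open>xs \<noteq> []\<close> by (simp add: hd_conv_nth)
  ultimately have "xs ! 1 \<in> N v" using N_iff by auto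
  hence "N v \<noteq> {}" by auto
  thus ?thesis unfolding degree_nbrs by (simp add: Suc_le_eq card_gt_0_iff)
qed

lemma no_cycle:
  assumes "K \<ge> 3" "inj_on c {0..<K}" "\<And>t. Suc t < K \<Longrightarrow> E (c t) (c (Suc t))" "E (c (K - 1)) (c 0)"
  shows False
proof -
  define xs where "xs = map c [0..<K]"
  have "length xs \<ge> 3" "distinct xs" using assms unfolding xs_def by (auto simp: distinct_map)
  moreover have "walk E xs" unfolding walk_def xs_def using assms by auto
  moreover have "E (last xs) (hd xs)" unfolding xs_def using assms
    by (simp add: last_map hd_map)
  ultimately have "has_cycle E" unfolding has_cycle_def by blast
  thus False using acyc by simp
qed

definition nxt :: "nat \<Rightarrow> nat \<Rightarrow> nat" where
  "nxt p v = (SOME z. z < n \<and> E v z \<and> z \<noteq> p)"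

definition y :: "nat \<Rightarrow> nat \<Rightarrow> nat" where
  "y w = seqw nxt m w"

lemma y0[simp]: "y w 0 = m" and y1[simp]: "y w (Suc 0) = w"
  and ySS: "y w (Suc (Suc k)) = nxt (y w k) (y w (Suc k))"
  unfolding y_def by auto

definition P :: "nat \<Rightarrow> nat \<Rightarrow> bool" where
  "P w k \<longleftrightarrow> (\<forall>i\<le>k. y w i < n) \<and> inj_on (y w) {0..k} \<and> (\<forall>i<k. E (y w i) (y w (Suc i)))
      \<and> (\<forall>i. 1 \<le> i \<and> i < k \<longrightarrow> deg (y w i) = 2)"

lemma P1: assumes "w \<in> N m" shows "P w 1"
proof -
  have "E m w" using assms N_iff by auto
  hence "w < n" "m \<noteq> w" using Eb Eirr by auto
  moreover have "{0..1::nat} = {0, 1}" by auto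
  ultimately show ?thesis unfolding P_def using mn \<open>E m w\<close>
    by (auto simp: le_Suc_eq)
qed

lemma Pstep:
  assumes Pk: "P w k" and k: "k \<ge> 1" and d: "deg (y w k) = 2"
  shows "P w (Suc k)"
proof -
  obtain k' where k': "k = Suc k'" using k by (cases k) auto
  have yk: "y w k < n" using Pk unfolding P_def by auto
  have inj: "inj_on (y w) {0..k}" using Pk unfolding P_def by auto
  have Ek': "E (y w k') (y w k)" using Pk k' unfolding P_def by auto
  have ex: "\<exists>z. z < n \<and> E (y w k) z \<and> z \<noteq> y w k'"
  proof (rule ccontr)
    assume "\<not> ?thesis"
    hence "N (y w k) \<subseteq> {y w k'}" unfolding nbrs_def by auto
    hence "card (N (y w k)) \<le> 1" using card_mono[of "{y w k'}"] by fastforce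
    thus False using d degree_nbrs by simp
  qed
  have ySk: "y w (Suc k) = nxt (y w k') (y w k)" using k' ySS by simp
  have z: "y w (Suc k) < n \<and> E (y w k) (y w (Suc k)) \<and> y w (Suc k) \<noteq> y w k'"
    unfolding ySk nxt_def by (rule someI_ex[OF ex])
  have new: "y w (Suc k) \<notin> y w ` {0..k}"
  proof
    assume "y w (Suc k) \<in> y w ` {0..k}"
    then obtain i where i: "i \<le> k" "y w (Suc k) = y w i" by auto
    have "i \<noteq> k" using z i Eirr by metis
    moreover have "i \<noteq> k'" using z i by auto
    ultimately have ik: "i + 2 \<le> k" using i k' by auto
    define c where "c t = y w (i + t)" for t
    show False
    proof (rule no_cycle[of "k - i + 1" c])
      show "3 \<le> k - i + 1" using ik by auto
      show "inj_on c {0..<k - i + 1}"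
      proof (rule inj_onI)
        fix a b assume "a \<in> {0..<k - i + 1}" "b \<in> {0..<k - i + 1}" "c a = c b"
        hence "i + a \<in> {0..k}" "i + b \<in> {0..k}" "y w (i + a) = y w (i + b)"
          using ik unfolding c_def by auto
        from inj_onD[OF inj this(3,1,2)] show "a = b" by simp
      qed
      show "E (c t) (c (Suc t))" if "Suc t < k - i + 1" for t
        using Pk that unfolding P_def c_def by auto
      show "E (c (k - i + 1 - 1)) (c 0)" unfolding c_def using z i ik by simp
    qed
  qed
  show ?thesis unfolding P_def
  proof (intro conjI allI impI)
    show "y w j < n" if "j \<le> Suc k" for j
      using that Pk z unfolding P_def by (auto simp: le_Suc_eq)
    show "inj_on (y w) {0..Suc k}"
      using inj new by (simp add: atLeastAtMostSuc_conv)
    show "E (y w j) (y w (Suc j))" if "j < Suc k" for j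
      using that Pk z unfolding P_def by (auto simp: less_Suc_eq)
    show "deg (y w j) = 2" if "1 \<le> j \<and> j < Suc k" for j
      using that Pk d unfolding P_def by (auto simp: less_Suc_eq)
  qed
qed

lemma P_upto:
  assumes w: "w \<in> N m" and k: "k \<ge> 1" and d: "\<forall>i. 1 \<le> i \<and> i < k \<longrightarrow> deg (y w i) = 2"
  shows "P w k"
  using k d
proof (induction k rule: dec_induct)
  case base then show ?case using P1[OF w] by simp
next
  case (step k)
  then show ?case using Pstep[of w k] by auto
qed

lemma P_bound: assumes "P w k" shows "k < n"
proof -
  have "inj_on (y w) {0..k}" "y w ` {0..k} \<subseteq> {0..<n}" using assms unfolding P_def by auto
  hence "card {0..k} \<le> card {0..<n}"
    by (metis card_image card_mono finite_atLeastLessThan)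
  thus ?thesis by simp
qed

definition Lw :: "nat \<Rightarrow> nat" where
  "Lw w = (LEAST k. 1 \<le> k \<and> deg (y w k) \<noteq> 2)"

lemma Lw_ex: assumes w: "w \<in> N m" shows "\<exists>k. 1 \<le> k \<and> deg (y w k) \<noteq> 2"
proof (rule ccontr)
  assume "\<not> ?thesis"
  hence "P w n" using P_upto[OF w, of n] mn by auto
  thus False using P_bound by auto
qed

lemma Lw: assumes w: "w \<in> N m"
  shows "1 \<le> Lw w" "deg (y w (Lw w)) \<noteq> 2" "\<And>i. 1 \<le> i \<Longrightarrow> i < Lw w \<Longrightarrow> deg (y w i) = 2"
proof -
  from LeastI_ex[OF Lw_ex[OF w]] show "1 \<le> Lw w" "deg (y w (Lw w)) \<noteq> 2" unfolding Lw_def by auto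
  show "deg (y w i) = 2" if "1 \<le> i" "i < Lw w" for i
    using not_less_Least[of i "\<lambda>k. 1 \<le> k \<and> deg (y w k) \<noteq> 2"] that unfolding Lw_def by auto
qed

lemma PL: assumes w: "w \<in> N m" shows "P w (Lw w)"
  using P_upto[OF w Lw(1)[OF w]] Lw(3)[OF w] by auto

lemma y_lt: assumes w: "w \<in> N m" "i \<le> Lw w" shows "y w i < n"
  using PL[OF w(1)] w(2) unfolding P_def by auto

lemma y_inj: assumes w: "w \<in> N m" "i \<le> Lw w" "j \<le> Lw w" "y w i = y w j" shows "i = j"
  using PL[OF w(1)] w(2-4) unfolding P_def by (auto dest: inj_onD)

lemma y_E: assumes w: "w \<in> N m" "i < Lw w" shows "E (y w i) (y w (Suc i))"
  using PL[OF w(1)] w(2) unfolding P_def by auto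

lemma y_notm: assumes w: "w \<in> N m" "1 \<le> i" "i \<le> Lw w" shows "y w i \<noteq> m"
  using y_inj[OF w(1) w(3), of 0] w by auto

lemma deg_end: assumes w: "w \<in> N m" shows "deg (y w (Lw w)) = 1"
proof -
  have "y w (Lw w) < n" "y w (Lw w) \<noteq> m" using y_lt[OF w] y_notm[OF w Lw(1)[OF w]] by auto
  with deg_pos degle Lw(2)[OF w] show ?thesis by force
qed

lemma N_int: assumes w: "w \<in> N m" and j: "1 \<le> j" "j < Lw w"
  shows "N (y w j) = {y w (j - 1), y w (Suc j)}"
proof -
  have s: "{y w (j - 1), y w (Suc j)} \<subseteq> N (y w j)"
    using y_E[OF w, of "j - 1"] y_E[OF w, of j] j Esym by (auto simp: N_iff)
  have "y w (j - 1) \<noteq> y w (Suc j)"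
  proof
    assume "y w (j - 1) = y w (Suc j)"
    moreover have "j - 1 \<le> Lw w" "Suc j \<le> Lw w" using j by auto
    ultimately have "j - 1 = Suc j" using y_inj[OF w] by blast
    thus False by simp
  qed
  hence "card {y w (j - 1), y w (Suc j)} = 2" by simp
  moreover have "card (N (y w j)) = 2" using Lw(3)[OF w j] degree_nbrs by simp
  ultimately show ?thesis using s by (metis card_subset_eq finite_nbrs)
qed

lemma N_end: assumes w: "w \<in> N m"
  shows "N (y w (Lw w)) = {y w (Lw w - 1)}"
proof -
  have s: "{y w (Lw w - 1)} \<subseteq> N (y w (Lw w))"
    using y_E[OF w, of "Lw w - 1"] Lw(1)[OF w] Esym by (auto simp: N_iff)
  moreover have "card (N (y w (Lw w))) = 1" using deg_end[OF w] degree_nbrs by simp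
  ultimately show ?thesis by (metis card_subset_eq finite_nbrs is_singletonI is_singleton_altdef)
qed

lemma legs_disjoint:
  assumes w: "w \<in> N m" and w': "w' \<in> N m" and ww: "w \<noteq> w'"
    and ij: "1 \<le> i" "i \<le> Lw w" "1 \<le> j" "j \<le> Lw w'" "y w i = y w' j"
  shows False
proof -
  define Q where "Q i \<longleftrightarrow> 1 \<le> i \<and> i \<le> Lw w \<and> (\<exists>j. 1 \<le> j \<and> j \<le> Lw w' \<and> y w i = y w' j)" for i
  have "Q i" unfolding Q_def using ij by auto
  define i0 where "i0 = (LEAST i. Q i)"
  have Qi0: "Q i0" unfolding i0_def by (rule LeastI[of Q, OF \<open>Q i\<close>])
  have mini: "\<not> Q a" if "a < i0" for a using not_less_Least[of a Q] that unfolding i0_def by auto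
  from Qi0 obtain j0 where i0: "1 \<le> i0" "i0 \<le> Lw w" and j0: "1 \<le> j0" "j0 \<le> Lw w'"
    and eq: "y w i0 = y w' j0" unfolding Q_def by auto
  define K where "K = i0 + j0"
  define c where "c t = (if t \<le> i0 then y w t else y w' (K - t))" for t
  have c2: "c t = y w' (K - t)" if "i0 \<le> t" for t
    using that eq unfolding c_def K_def by auto
  show False
  proof (rule no_cycle[of K c])
    show "3 \<le> K"
    proof (rule ccontr)
      assume "\<not> 3 \<le> K"
      hence "i0 = 1" "j0 = 1" using i0 j0 unfolding K_def by auto
      thus False using eq ww by simp
    qed
    show "inj_on c {0..<K}"
    proof -
      have *: "a = b" if ab: "a < b" "b < K" "c a = c b" for a b
      proof (cases "b \<le> i0")
        case True
        hence "y w a = y w b" using ab unfolding c_def by auto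
        thus ?thesis using y_inj[OF w, of a b] True ab i0 by auto
      next
        case False
        hence cb: "c b = y w' (K - b)" using c2 by auto
        have kb: "1 \<le> K - b" "K - b < j0" using ab False unfolding K_def by auto
        show ?thesis
        proof (cases "i0 < a")
          case True
          hence "y w' (K - a) = y w' (K - b)" using ab c2 by auto
          hence "K - a = K - b" using y_inj[OF w', of "K - a" "K - b"] kb j0 True unfolding K_def by auto
          thus ?thesis using ab by auto
        next
          case False
          hence ca: "c a = y w a" unfolding c_def by auto
          show ?thesis
          proof (cases "a = 0")
            case True
            hence "y w' (K - b) = m" using ca cb ab by simp
            thus ?thesis using y_notm[OF w', of "K - b"] kb j0 by auto
          next
            case a0: False
            show ?thesis
            proof (cases "a = i0")
              case True
              hence "y w' j0 = y w' (K - b)" using ca cb ab eq by simp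
              hence "j0 = K - b" using y_inj[OF w', of j0 "K - b"] kb j0 by auto
              thus ?thesis using kb by auto
            next
              case False
              hence "a < i0" using \<open>\<not> i0 < a\<close> by auto
              moreover have "Q a" unfolding Q_def
                using a0 \<open>a < i0\<close> i0 ca cb ab kb j0 by (intro conjI exI[of _ "K - b"]) auto
              ultimately show ?thesis using mini by auto
            qed
          qed
        qed
      qed
      show ?thesis by (rule inj_onI) (metis * atLeastLessThan_iff linorder_neqE_nat)
    qed
    show "E (c t) (c (Suc t))" if t: "Suc t < K" for t
    proof (cases "Suc t \<le> i0")
      case True
      thus ?thesis using y_E[OF w, of t] i0 unfolding c_def by auto
    next
      case False
      hence "c t = y w' (Suc (K - Suc t))" "c (Suc t) = y w' (K - Suc t)"
        using c2[of t] c2[of "Suc t"] t by (auto simp: Suc_diff_Suc)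
      moreover have "K - Suc t < Lw w'" using j0 False t unfolding K_def by auto
      ultimately show ?thesis using y_E[OF w', of "K - Suc t"] Esym by auto
    qed
    show "E (c (K - 1)) (c 0)"
    proof -
      have "c (K - 1) = y w' 1" using c2[of "K - 1"] j0 unfolding K_def by auto
      moreover have "c 0 = m" unfolding c_def by simp
      moreover have "E m w'" using w' N_iff by auto
      ultimately show ?thesis using Esym by auto
    qed
  qed
qed

definition S :: "nat set" where
  "S = insert m {y w j | w j. w \<in> N m \<and> 1 \<le> j \<and> j \<le> Lw w}"

lemma S_closed: assumes a: "a \<in> S" and e: "E a b" shows "b \<in> S"
proof -
  have bN: "b \<in> N a" using e N_iff by auto
  have prev: "y w (j - 1) \<in> S" if "w \<in> N m" "1 \<le> j" "j \<le> Lw w" for w j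
  proof (cases "j = 1")
    case True thus ?thesis unfolding S_def by simp
  next
    case False thus ?thesis unfolding S_def using that
      by (intro insertI2 CollectI exI[of _ w] exI[of _ "j - 1"]) auto
  qed
  show ?thesis
  proof (cases "a = m")
    case True
    hence "b \<in> N m" using bN by simp
    moreover have "b = y b 1" by simp
    ultimately show ?thesis unfolding S_def using Lw(1) by blast
  next
    case False
    then obtain w j where wj: "w \<in> N m" "1 \<le> j" "j \<le> Lw w" "a = y w j" using a unfolding S_def by auto
    show ?thesis
    proof (cases "j = Lw w")
      case True
      hence "b = y w (j - 1)" using bN N_end[OF wj(1)] wj by auto
      thus ?thesis using prev wj by auto
    next
      case False
      hence "b = y w (j - 1) \<or> b = y w (Suc j)" using bN N_int[OF wj(1) wj(2)] wj by auto
      moreover have "y w (Suc j) \<in> S" unfolding S_def using wj False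
        by (intro insertI2 CollectI exI[of _ w] exI[of _ "Suc j"]) auto
      ultimately show ?thesis using prev wj by auto
    qed
  qed
qed

lemma walk_in_S: assumes "walk E xs" "hd xs \<in> S" "k < length xs" shows "xs ! k \<in> S"
  using assms(3)
proof (induction k)
  case 0 thus ?case using assms(1,2) unfolding walk_def by (simp add: hd_conv_nth)
next
  case (Suc k)
  hence "E (xs ! k) (xs ! Suc k)" using assms(1) unfolding walk_def by auto
  thus ?case using Suc S_closed by auto
qed

lemma cover: assumes "v < n" shows "v \<in> S"
proof -
  from conn assms mn obtain xs where xs: "walk E xs" "hd xs = m" "last xs = v"
    unfolding connected_graph_def by blast
  have ne: "xs \<noteq> []" using xs unfolding walk_def by auto
  have "xs ! (length xs - 1) \<in> S" using walk_in_S[OF xs(1)] xs(2) ne unfolding S_def by simp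
  thus ?thesis using xs(3) ne by (simp add: last_conv_nth)
qed

lemma pendants_eq: "pendant_vertices n E = (\<lambda>w. y w (Lw w)) ` N m"
proof (intro equalityI subsetI)
  fix v assume "v \<in> pendant_vertices n E"
  hence v: "v < n" "deg v = 1" unfolding pendant_vertices_def by auto
  have "v \<noteq> m" using v degm by auto
  with cover[OF v(1)] obtain w j where wj: "w \<in> N m" "1 \<le> j" "j \<le> Lw w" "v = y w j"
    unfolding S_def by auto
  have "j = Lw w" using Lw(3)[OF wj(1) wj(2)] wj v by force
  thus "v \<in> (\<lambda>w. y w (Lw w)) ` N m" using wj by auto
next
  fix v assume "v \<in> (\<lambda>w. y w (Lw w)) ` N m"
  then obtain w where w: "w \<in> N m" "v = y w (Lw w)" by auto
  thus "v \<in> pendant_vertices n E" unfolding pendant_vertices_def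
    using deg_end[OF w(1)] y_lt[OF w(1)] by auto
qed

lemma ends_inj: "inj_on (\<lambda>w. y w (Lw w)) (N m)"
proof (rule inj_onI)
  fix w w' assume "w \<in> N m" "w' \<in> N m" "y w (Lw w) = y w' (Lw w')"
  thus "w = w'" using legs_disjoint[of w w' "Lw w" "Lw w'"] Lw(1) by auto
qed

lemma card_pend: "card (pendant_vertices n E) = deg m"
  unfolding pendants_eq card_image[OF ends_inj] degree_nbrs ..

end


definition sq :: "nat \<Rightarrow> complex" where
  "sq j = (if j mod 6 = 0 then 1 else if j mod 6 = 1 then 0 else if j mod 6 = 2 then -1
           else if j mod 6 = 3 then -1 else if j mod 6 = 4 then 0 else 1)"

lemma sq_rec: "sq (Suc (Suc j)) = sq (Suc j) - sq j"
  unfolding sq_def by (auto simp: mod_Suc)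

locale spider =
  fixes n :: nat and E :: "nat \<Rightarrow> nat \<Rightarrow> bool" and m :: nat
    and Y :: "nat \<Rightarrow> nat \<Rightarrow> nat" and L :: "nat \<Rightarrow> nat"
  assumes sg: "simple_graph n E"
    and mn: "m < n"
    and L1: "\<And>k. k < 3 \<Longrightarrow> 1 \<le> L k"
    and Y0: "\<And>k. k < 3 \<Longrightarrow> Y k 0 = m"
    and Yn: "\<And>k j. k < 3 \<Longrightarrow> j \<le> L k \<Longrightarrow> Y k j < n"
    and Yinj: "\<And>k k' j j'. k < 3 \<Longrightarrow> k' < 3 \<Longrightarrow> 1 \<le> j \<Longrightarrow> j \<le> L k \<Longrightarrow> 1 \<le> j' \<Longrightarrow> j' \<le> L k'
                 \<Longrightarrow> Y k j = Y k' j' \<Longrightarrow> k = k' \<and> j = j'"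
    and Ynotm: "\<And>k j. k < 3 \<Longrightarrow> 1 \<le> j \<Longrightarrow> j \<le> L k \<Longrightarrow> Y k j \<noteq> m"
    and cover: "\<And>v. v < n \<Longrightarrow> v \<noteq> m \<Longrightarrow> \<exists>k<3. \<exists>j. 1 \<le> j \<and> j \<le> L k \<and> v = Y k j"
    and Nm: "nbrs n E m = {Y 0 1, Y 1 1, Y 2 1}"
    and Nint: "\<And>k j. k < 3 \<Longrightarrow> 1 \<le> j \<Longrightarrow> j < L k \<Longrightarrow> nbrs n E (Y k j) = {Y k (j - 1), Y k (Suc j)}"
    and Nend: "\<And>k. k < 3 \<Longrightarrow> nbrs n E (Y k (L k)) = {Y k (L k - 1)}"
    and pend: "pendant_vertices n E = {Y 0 (L 0), Y 1 (L 1), Y 2 (L 2)}"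

lemma (in tctx) spider_ex:
  assumes "card (pendant_vertices n E) = 3"
  shows "\<exists>Y L. spider n E m Y L"
proof -
  have "card (N m) = 3" using assms card_pend degree_nbrs by simp
  then obtain w0 w1 w2 where W: "N m = {w0, w1, w2}" "w0 \<noteq> w1" "w1 \<noteq> w2" "w0 \<noteq> w2"
    using card_3_iff[of "N m"] by blast
  define W where "W k = (if k = 0 then w0 else if k = 1 then w1 else w2)" for k :: nat
  have WN: "W k \<in> N m" for k unfolding W_def W by auto
  have k3: "k < 3 \<Longrightarrow> k = 0 \<or> k = 1 \<or> k = 2" for k :: nat by auto
  have Winj: "k < 3 \<Longrightarrow> k' < 3 \<Longrightarrow> W k = W k' \<Longrightarrow> k = k'" for k k'
    using k3[of k] k3[of k'] W(2-4) unfolding W_def by auto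
  have Wall: "w \<in> N m \<Longrightarrow> \<exists>k<3. w = W k" for w
  proof -
    assume "w \<in> N m"
    hence "w = W 0 \<or> w = W 1 \<or> w = W 2" unfolding W_def using W(1) by auto
    thus ?thesis by (metis zero_less_numeral one_less_numeral_iff semiring_norm(77) lessI numeral_2_eq_2 numeral_3_eq_3)
  qed
  define Y where "Y k = y (W k)" for k
  define L where "L k = Lw (W k)" for k
  have "spider n E m Y L"
  proof
    show "simple_graph n E" by (rule sg)
    show "m < n" by (rule mn)
    show "1 \<le> L k" for k unfolding L_def using Lw(1)[OF WN] .
    show "Y k 0 = m" for k unfolding Y_def by simp
    show "Y k j < n" if "j \<le> L k" for k j using y_lt[OF WN] that unfolding Y_def L_def .
    show "k = k' \<and> j = j'" if "k < 3" "k' < 3" "1 \<le> j" "j \<le> L k" "1 \<le> j'" "j' \<le> L k'" "Y k j = Y k' j'"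
      for k k' j j'
    proof (cases "W k = W k'")
      case True
      hence "k = k'" using Winj that by auto
      thus ?thesis using y_inj[OF WN, of j k j'] that True unfolding Y_def L_def by auto
    next
      case False
      thus ?thesis using legs_disjoint[OF WN WN False, of j j'] that unfolding Y_def L_def by auto
    qed
    show "Y k j \<noteq> m" if "1 \<le> j" "j \<le> L k" for k j
      using y_notm[OF WN] that unfolding Y_def L_def by auto
    show "\<exists>k<3. \<exists>j. 1 \<le> j \<and> j \<le> L k \<and> v = Y k j" if "v < n" "v \<noteq> m" for v
    proof -
      from cover[OF that(1)] that(2) obtain w j where wj: "w \<in> N m" "1 \<le> j" "j \<le> Lw w" "v = y w j"
        unfolding S_def by auto
      from Wall[OF wj(1)] obtain k where "k < 3" "w = W k" by auto
      thus ?thesis using wj unfolding Y_def L_def by auto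
    qed
    show "N m = {Y 0 1, Y 1 1, Y 2 1}" unfolding Y_def W_def using W by simp
    show "N (Y k j) = {Y k (j - 1), Y k (Suc j)}" if "1 \<le> j" "j < L k" for k j
      using N_int[OF WN that[unfolded L_def]] unfolding Y_def .
    show "N (Y k (L k)) = {Y k (L k - 1)}" for k
      using N_end[OF WN] unfolding Y_def L_def .
    show "pendant_vertices n E = {Y 0 (L 0), Y 1 (L 1), Y 2 (L 2)}"
      unfolding pendants_eq W Y_def L_def W_def by simp
  qed
  thus ?thesis by blast
qed

context spider
begin

lemma Eb: "E i j \<Longrightarrow> i < n \<and> j < n" using sg unfolding simple_graph_def by auto
lemma Esym: "E i j \<Longrightarrow> E j i" using sg unfolding simple_graph_def by auto
lemma Eirr: "\<not> E i i" using sg unfolding simple_graph_def by auto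
lemma N_iff: "j \<in> nbrs n E v \<longleftrightarrow> E v j" unfolding nbrs_def using Eb by auto

lemma Yedge: assumes "k < 3" "1 \<le> j" "j \<le> L k" shows "E (Y k j) (Y k (j - 1))"
proof (cases "j = L k")
  case True thus ?thesis using Nend[OF assms(1)] N_iff by auto
next
  case False thus ?thesis using Nint[OF assms(1,2)] assms N_iff by auto
qed

lemma dist_leg: assumes k: "k < 3" shows "graph_dist E (Y k (L k)) m = L k"
proof -
  let ?U = "Y k (L k)"
  let ?Q = "\<lambda>d. \<exists>xs. walk E xs \<and> hd xs = ?U \<and> last xs = m \<and> length xs = Suc d"
  have ex: "?Q (L k)"
  proof (intro exI conjI)
    let ?xs = "map (\<lambda>t. Y k (L k - t)) [0..<Suc (L k)]"
    show "walk E ?xs" unfolding walk_def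
    proof (intro conjI allI impI)
      show "?xs \<noteq> []" by simp
      fix t assume t: "Suc t < length ?xs"
      hence "t < L k" by simp
      hence "E (Y k (L k - t)) (Y k (L k - t - 1))" using Yedge[OF k, of "L k - t"] by auto
      moreover have "L k - t - 1 = L k - Suc t" by simp
      ultimately show "E (?xs ! t) (?xs ! Suc t)" using t by (simp del: upt_Suc)
    qed
    show "hd ?xs = ?U" by (simp del: upt_Suc add: hd_map)
    show "last ?xs = m" using Y0[OF k] by (simp del: upt_Suc add: last_map)
    show "length ?xs = Suc (L k)" by simp
  qed
  have lb: "L k \<le> d" if "?Q d" for d
  proof -
    from that obtain zs where zs: "walk E zs" "hd zs = ?U" "last zs = m" "length zs = Suc d" by auto
    have ne: "zs \<noteq> []" using zs by auto
    have claim: "L k \<le> t \<or> (\<exists>j. L k \<le> j + t \<and> 1 \<le> j \<and> j \<le> L k \<and> zs ! t = Y k j)"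
      if "t < length zs" for t
      using that
    proof (induction t)
      case 0 thus ?case using zs(2) ne L1[OF k] by (auto simp: hd_conv_nth intro!: exI[of _ "L k"])
    next
      case (Suc t)
      show ?case
      proof (cases "L k \<le> Suc t")
        case True thus ?thesis by simp
      next
        case False
        with Suc obtain j where j: "L k \<le> j + t" "1 \<le> j" "j \<le> L k" "zs ! t = Y k j" by auto
        have e: "E (Y k j) (zs ! Suc t)" using zs(1) Suc.prems j(4) unfolding walk_def by metis
        hence mem: "zs ! Suc t \<in> nbrs n E (Y k j)" using N_iff by auto
        show ?thesis
        proof (cases "j = L k")
          case True
          hence "zs ! Suc t = Y k (j - 1)" using mem Nend[OF k] by auto
          thus ?thesis using False j True by (intro disjI2 exI[of _ "j - 1"]) auto
        next
          case jL: False
          hence "zs ! Suc t = Y k (j - 1) \<or> zs ! Suc t = Y k (Suc j)" using mem Nint[OF k j(2)] j by auto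
          thus ?thesis
          proof
            assume "zs ! Suc t = Y k (j - 1)"
            thus ?thesis using False j by (intro disjI2 exI[of _ "j - 1"]) auto
          next
            assume "zs ! Suc t = Y k (Suc j)"
            thus ?thesis using False j jL by (intro disjI2 exI[of _ "Suc j"]) auto
          qed
        qed
      qed
    qed
    have "zs ! d = m" using zs(3,4) ne by (simp add: last_conv_nth)
    with claim[of d] zs(4) Ynotm[OF k] show ?thesis by force
  qed
  show ?thesis unfolding graph_dist_def
    by (rule Least_equality[of ?Q, OF ex lb])
qed

definition Cm :: "complex mat" where
  "Cm = char_matrix (map_mat complex_of_real (laplacian n E)) 1"

lemma Cm_carrier: "Cm \<in> carrier_mat n n"
  unfolding Cm_def laplacian_def by simp

lemma Cm_mult: assumes i: "i < n" and x: "x \<in> carrier_vec n"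
  shows "(Cm *\<^sub>v x) $ i = (of_nat (degree n E i) - 1) * x $ i - (\<Sum>j\<in>nbrs n E i. x $ j)"
proof -
  have "(Cm *\<^sub>v x) $ i = (\<Sum>j<n. Cm $$ (i, j) * x $ j)"
    using Cm_carrier i x by (auto simp: scalar_prod_def row_def lessThan_atLeast0)
  also have "\<dots> = (\<Sum>j<n. (if i = j then (of_nat (degree n E i) - 1) * x $ j else 0)
                        - (if E i j then x $ j else 0))"
    by (rule sum.cong[OF refl]) (use i in \<open>auto simp: Cm_def laplacian_def char_matrix_def algebra_simps\<close>)
  also have "\<dots> = (of_nat (degree n E i) - 1) * x $ i - (\<Sum>j<n. if E i j then x $ j else 0)"
    using i by (simp add: sum_subtractf)
  also have "(\<Sum>j<n. if E i j then x $ j else 0) = (\<Sum>j\<in>nbrs n E i. x $ j)"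
    unfolding nbrs_def by (simp add: sum.If_cases lessThan_def Collect_conj_eq Int_commute)
  finally show ?thesis .
qed

lemma deg_m: "degree n E m = 3"
proof -
  have "Y 0 1 \<noteq> Y 1 1" "Y 1 1 \<noteq> Y 2 1" "Y 0 1 \<noteq> Y 2 1"
    using Yinj[of 0 1 1 1] Yinj[of 1 2 1 1] Yinj[of 0 2 1 1] L1[of 0] L1[of 1] L1[of 2] by auto
  thus ?thesis unfolding degree_nbrs Nm by simp
qed

lemma deg_int: assumes "k < 3" "1 \<le> j" "j < L k" shows "degree n E (Y k j) = 2"
proof -
  have "Y k (j - 1) \<noteq> Y k (Suc j)"
  proof (cases "j = 1")
    case True thus ?thesis using Y0[OF assms(1)] Ynotm[OF assms(1), of "Suc j"] assms by auto
  next
    case False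
    hence "1 \<le> j - 1" "j - 1 \<le> L k" "1 \<le> Suc j" "Suc j \<le> L k" using assms by auto
    from Yinj[OF assms(1) assms(1) this] show ?thesis by auto
  qed
  thus ?thesis unfolding degree_nbrs Nint[OF assms] by simp
qed

lemma deg_end: assumes "k < 3" shows "degree n E (Y k (L k)) = 1"
  unfolding degree_nbrs Nend[OF assms] by simp

lemma ker_iff: assumes x: "x \<in> carrier_vec n"
  shows "Cm *\<^sub>v x = 0\<^sub>v n \<longleftrightarrow>
    (2 * x $ m = x $ (Y 0 1) + x $ (Y 1 1) + x $ (Y 2 1)) \<and>
    (\<forall>k<3. \<forall>j. 1 \<le> j \<and> j < L k \<longrightarrow> x $ (Y k j) = x $ (Y k (j - 1)) + x $ (Y k (Suc j))) \<and>
    (\<forall>k<3. x $ (Y k (L k - 1)) = 0)"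
proof -
  have d: "Y 0 1 \<noteq> Y 1 1" "Y 1 1 \<noteq> Y 2 1" "Y 0 1 \<noteq> Y 2 1"
    using Yinj[of 0 1 1 1] Yinj[of 1 2 1 1] Yinj[of 0 2 1 1] L1[of 0] L1[of 1] L1[of 2] by auto
  have em: "(Cm *\<^sub>v x) $ m = 2 * x $ m - (x $ (Y 0 1) + x $ (Y 1 1) + x $ (Y 2 1))"
    using Cm_mult[OF mn x] deg_m d unfolding Nm by (simp add: add.assoc)
  have ei: "(Cm *\<^sub>v x) $ (Y k j) = x $ (Y k j) - (x $ (Y k (j - 1)) + x $ (Y k (Suc j)))"
    if "k < 3" "1 \<le> j" "j < L k" for k j
  proof -
    have "Y k (j - 1) \<noteq> Y k (Suc j)"
      using deg_int[OF that] unfolding degree_nbrs Nint[OF that] by (auto split: if_splits)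
    moreover have "Y k j < n" using Yn[OF that(1)] that by auto
    ultimately show ?thesis using Cm_mult[OF \<open>Y k j < n\<close> x] deg_int[OF that] unfolding Nint[OF that]
      by simp
  qed
  have ee: "(Cm *\<^sub>v x) $ (Y k (L k)) = - x $ (Y k (L k - 1))" if "k < 3" for k
    using Cm_mult[OF Yn[OF that le_refl] x] deg_end[OF that] unfolding Nend[OF that] by simp
  show ?thesis
  proof
    assume z: "Cm *\<^sub>v x = 0\<^sub>v n"
    have zi: "(Cm *\<^sub>v x) $ i = 0" if "i < n" for i using z that by simp
    show "(2 * x $ m = x $ (Y 0 1) + x $ (Y 1 1) + x $ (Y 2 1)) \<and>
      (\<forall>k<3. \<forall>j. 1 \<le> j \<and> j < L k \<longrightarrow> x $ (Y k j) = x $ (Y k (j - 1)) + x $ (Y k (Suc j))) \<and>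
      (\<forall>k<3. x $ (Y k (L k - 1)) = 0)"
    proof (intro conjI allI impI)
      show "2 * x $ m = x $ (Y 0 1) + x $ (Y 1 1) + x $ (Y 2 1)" using zi[OF mn] em by simp
      fix k :: nat assume k: "k < 3"
      show "x $ (Y k (L k - 1)) = 0" using zi[OF Yn[OF k le_refl]] ee[OF k] by simp
      fix j :: nat assume j: "1 \<le> j \<and> j < L k"
      show "x $ (Y k j) = x $ (Y k (j - 1)) + x $ (Y k (Suc j))"
        using zi[OF Yn[OF k, of j]] ei[OF k] j by simp
    qed
  next
    assume h: "(2 * x $ m = x $ (Y 0 1) + x $ (Y 1 1) + x $ (Y 2 1)) \<and>
      (\<forall>k<3. \<forall>j. 1 \<le> j \<and> j < L k \<longrightarrow> x $ (Y k j) = x $ (Y k (j - 1)) + x $ (Y k (Suc j))) \<and>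
      (\<forall>k<3. x $ (Y k (L k - 1)) = 0)"
    show "Cm *\<^sub>v x = 0\<^sub>v n"
    proof (rule eq_vecI)
      show "dim_vec (Cm *\<^sub>v x) = dim_vec (0\<^sub>v n)" using Cm_carrier by simp
      fix i assume "i < dim_vec (0\<^sub>v n)"
      hence i: "i < n" by simp
      show "(Cm *\<^sub>v x) $ i = 0\<^sub>v n $ i"
      proof (cases "i = m")
        case True thus ?thesis using em h i by simp
      next
        case False
        from cover[OF i False] obtain k j where kj: "k < 3" "1 \<le> j" "j \<le> L k" "i = Y k j" by auto
        show ?thesis
        proof (cases "j = L k")
          case True thus ?thesis using ee[OF kj(1)] h kj i by simp
        next
          case False thus ?thesis using ei[OF kj(1,2)] h kj i by simp
        qed
      qed
    qed
  qed
qed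

definition U :: "nat \<Rightarrow> nat" where "U k = Y k (L k)"
definition sig :: "nat \<Rightarrow> complex" where "sig k = sq (L k)"
definition tau :: "nat \<Rightarrow> complex" where "tau k = sq (L k - 1)"
definition Phi :: "(nat \<Rightarrow> complex) \<Rightarrow> complex \<Rightarrow> bool" where
  "Phi t yv \<longleftrightarrow> (\<forall>k<3. yv = t k * sig k) \<and> 2 * yv = t 0 * tau 0 + t 1 * tau 1 + t 2 * tau 2"

lemma ker_form:
  assumes x: "x \<in> carrier_vec n" "Cm *\<^sub>v x = 0\<^sub>v n" and k: "k < 3" and j: "j \<le> L k"
  shows "x $ (Y k j) = x $ (U k) * sq (L k - j)"
proof -
  note h = ker_iff[OF x(1), THEN iffD1, OF x(2)]
  let ?P = "\<lambda>i. x $ (Y k (L k - i)) = x $ (U k) * sq i"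
  have "(i \<le> L k \<longrightarrow> ?P i) \<and> (Suc i \<le> L k \<longrightarrow> ?P (Suc i))" for i
  proof (induction i)
    case 0
    have "?P 0" unfolding U_def by (simp add: sq_def)
    moreover have "?P 1" using h k by (simp add: sq_def)
    ultimately show ?case by simp
  next
    case (Suc i)
    have "?P (Suc (Suc i))" if le: "Suc (Suc i) \<le> L k"
    proof -
      define p where "p = L k - Suc i"
      have p: "1 \<le> p" "p < L k" "p - 1 = L k - Suc (Suc i)" "Suc p = L k - i"
        using le unfolding p_def by auto
      have "x $ (Y k p) = x $ (Y k (p - 1)) + x $ (Y k (Suc p))" using h k p by blast
      hence "x $ (Y k (L k - Suc (Suc i))) = x $ (Y k (L k - Suc i)) - x $ (Y k (L k - i))"
        using p unfolding p_def by (simp add: algebra_simps)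
      also have "\<dots> = x $ (U k) * (sq (Suc i) - sq i)" using Suc le by (simp add: algebra_simps)
      finally show ?thesis by (simp add: sq_rec)
    qed
    thus ?case using Suc by simp
  qed
  hence "?P (L k - j)" by simp
  thus ?thesis using j by simp
qed

lemma ker_Phi:
  assumes x: "x \<in> carrier_vec n" "Cm *\<^sub>v x = 0\<^sub>v n"
  shows "Phi (\<lambda>k. x $ (U k)) (x $ m)"
proof -
  note h = ker_iff[OF x(1), THEN iffD1, OF x(2)]
  have m: "x $ m = x $ (U k) * sig k" if "k < 3" for k
    using ker_form[OF x that, of 0] Y0[OF that] unfolding sig_def by simp
  have one: "x $ (Y k 1) = x $ (U k) * tau k" if "k < 3" for k
    using ker_form[OF x that, of 1] L1[OF that] unfolding tau_def by simp
  show ?thesis unfolding Phi_def using m h one[of 0] one[of 1] one[of 2] by auto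
qed

definition pos :: "nat \<Rightarrow> nat \<times> nat" where
  "pos v = (SOME p. fst p < 3 \<and> 1 \<le> snd p \<and> snd p \<le> L (fst p) \<and> v = Y (fst p) (snd p))"

lemma pos_Y: assumes "k < 3" "1 \<le> j" "j \<le> L k" shows "pos (Y k j) = (k, j)"
proof -
  let ?Q = "\<lambda>p. fst p < 3 \<and> 1 \<le> snd p \<and> snd p \<le> L (fst p) \<and> Y k j = Y (fst p) (snd p)"
  have "?Q (k, j)" using assms by simp
  hence "?Q (pos (Y k j))" unfolding pos_def by (rule someI)
  thus ?thesis using Yinj[OF assms(1) _ assms(2,3)] by (metis prod.collapse)
qed

lemma Phi_ker:
  assumes P: "Phi t yv"
  shows "\<exists>x. x \<in> carrier_vec n \<and> Cm *\<^sub>v x = 0\<^sub>v n \<and> (\<forall>k<3. x $ (U k) = t k) \<and> x $ m = yv"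
proof -
  define x where "x = vec n (\<lambda>v. if v = m then yv else t (fst (pos v)) * sq (L (fst (pos v)) - snd (pos v)))"
  have xc: "x \<in> carrier_vec n" unfolding x_def by simp
  have xm: "x $ m = yv" unfolding x_def using mn by simp
  have xY: "x $ (Y k j) = t k * sq (L k - j)" if "k < 3" "j \<le> L k" for k j
  proof (cases "j = 0")
    case True
    thus ?thesis using xm Y0[OF that(1)] P that unfolding Phi_def sig_def by simp
  next
    case False
    hence "Y k j \<noteq> m" "pos (Y k j) = (k, j)" using Ynotm[OF that(1)] pos_Y[OF that(1)] that by auto
    thus ?thesis unfolding x_def using Yn[OF that] by simp
  qed
  have "Cm *\<^sub>v x = 0\<^sub>v n"
  proof (rule ker_iff[OF xc, THEN iffD2], intro conjI allI impI)
    show "2 * x $ m = x $ Y 0 1 + x $ Y 1 1 + x $ Y 2 1"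
      using P xm xY[of 0 1] xY[of 1 1] xY[of 2 1] L1[of 0] L1[of 1] L1[of 2] unfolding Phi_def tau_def by simp
    fix k j :: nat assume k: "k < 3" and j: "1 \<le> j \<and> j < L k"
    define a where "a = L k - Suc j"
    have a: "L k - j = Suc a" "L k - (j - 1) = Suc (Suc a)" "L k - Suc j = a" using j unfolding a_def by auto
    show "x $ Y k j = x $ Y k (j - 1) + x $ Y k (Suc j)"
    proof -
      have "j - 1 \<le> L k" "j \<le> L k" "Suc j \<le> L k" using j by auto
      hence "x $ Y k j = t k * sq (Suc a)" "x $ Y k (j - 1) = t k * sq (Suc (Suc a))"
        "x $ Y k (Suc j) = t k * sq a" using xY[OF k] a by auto
      thus ?thesis using sq_rec[of a] by (simp add: algebra_simps)
    qed
  next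
    fix k :: nat assume k: "k < 3"
    show "x $ Y k (L k - 1) = 0" using xY[OF k, of "L k - 1"] L1[OF k] by (simp add: sq_def)
  qed
  moreover have "\<forall>k<3. x $ (U k) = t k" using xY unfolding U_def by (simp add: sq_def)
  ultimately show ?thesis using xc xm by blast
qed

end


lemma m63: "(l::nat) mod 3 = (l mod 6) mod 3" by (simp add: mod_mod_cancel)
lemma p6: "(Suc l' mod 6 = 0 \<longrightarrow> l' mod 6 = 5) \<and> (Suc l' mod 6 \<noteq> 0 \<longrightarrow> l' mod 6 = Suc l' mod 6 - 1)"
  by (simp add: mod_Suc)

lemma sq_cases:
  assumes "1 \<le> l"
  shows "(l mod 3 = 1 \<and> sq l = 0 \<and> sq (l - 1) * sq (l - 1) = 1)
       \<or> (l mod 3 = 0 \<and> sq l = sq (l - 1) \<and> sq l * sq l = 1)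
       \<or> (l mod 3 = 2 \<and> sq (l - 1) = 0 \<and> sq l * sq l = 1)"
proof -
  obtain l' where l: "l = Suc l'" using assms by (cases l) auto
  define r where "r = Suc l' mod 6"
  have r6: "r < 6" unfolding r_def by simp
  have m3: "Suc l' mod 3 = r mod 3" unfolding r_def by (rule m63)
  have q: "l' mod 6 = (if r = 0 then 5 else r - 1)" using p6[of l'] unfolding r_def by auto
  have "r = 0 \<or> r = 1 \<or> r = 2 \<or> r = 3 \<or> r = 4 \<or> r = 5" using r6 by auto
  thus ?thesis unfolding sq_def l diff_Suc_1 m3 q r_def[symmetric] by (elim disjE) simp_all
qed

context spider
begin

lemma U_lt: "k < 3 \<Longrightarrow> U k < n" unfolding U_def using Yn by auto

lemma ker_eq:
  assumes x: "x \<in> carrier_vec n" "Cm *\<^sub>v x = 0\<^sub>v n"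
    and x': "x' \<in> carrier_vec n" "Cm *\<^sub>v x' = 0\<^sub>v n"
    and m: "x' $ m = c * x $ m" and u: "\<And>k. k < 3 \<Longrightarrow> x' $ (U k) = c * x $ (U k)"
  shows "x' = c \<cdot>\<^sub>v x"
proof (rule eq_vecI)
  show "dim_vec x' = dim_vec (c \<cdot>\<^sub>v x)" using x x' by simp
  fix i assume "i < dim_vec (c \<cdot>\<^sub>v x)"
  hence i: "i < n" using x by simp
  show "x' $ i = (c \<cdot>\<^sub>v x) $ i"
  proof (cases "i = m")
    case True thus ?thesis using m i x by simp
  next
    case False
    from cover[OF i False] obtain k j where kj: "k < 3" "1 \<le> j" "j \<le> L k" "i = Y k j" by auto
    have "x' $ i = x' $ (U k) * sq (L k - j)" using ker_form[OF x' kj(1,3)] kj by simp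
    also have "\<dots> = c * (x $ (U k) * sq (L k - j))" using u[OF kj(1)] by simp
    also have "x $ (U k) * sq (L k - j) = x $ i" using ker_form[OF x kj(1,3)] kj by simp
    finally show ?thesis using i x by simp
  qed
qed

lemma kd0:
  assumes "\<And>t yv. Phi t yv \<Longrightarrow> yv = 0 \<and> (\<forall>k<3. t k = 0)"
  shows "kernel_dim Cm = 0"
proof (rule kernel_dim_zero[OF Cm_carrier])
  fix x assume x: "x \<in> carrier_vec n" "Cm *\<^sub>v x = 0\<^sub>v n"
  from assms[OF ker_Phi[OF x]] have z: "x $ m = 0" "\<And>k. k < 3 \<Longrightarrow> x $ (U k) = 0" by auto
  have "x = 0 \<cdot>\<^sub>v x" by (rule ker_eq[OF x x]) (use z in auto)
  also have "\<dots> = 0\<^sub>v n" using x by (intro eq_vecI) auto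
  finally show "x = 0\<^sub>v n" .
qed

lemma kd1:
  assumes P0: "Phi t0 y0" and k0: "k0 < 3" "t0 k0 \<noteq> 0"
    and uniq: "\<And>t yv. Phi t yv \<Longrightarrow> \<exists>c. yv = c * y0 \<and> (\<forall>k<3. t k = c * t0 k)"
  shows "kernel_dim Cm = 1"
proof -
  from Phi_ker[OF P0] obtain v where v: "v \<in> carrier_vec n" "Cm *\<^sub>v v = 0\<^sub>v n"
    "\<forall>k<3. v $ (U k) = t0 k" "v $ m = y0" by auto
  show ?thesis
  proof (rule kernel_dim_one[OF Cm_carrier v(1,2) U_lt[OF k0(1)]])
    show "v $ U k0 \<noteq> 0" using v k0 by auto
    fix w assume w: "w \<in> carrier_vec n" "Cm *\<^sub>v w = 0\<^sub>v n"
    from uniq[OF ker_Phi[OF w]] obtain c where c: "w $ m = c * y0" "\<forall>k<3. w $ (U k) = c * t0 k" by auto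
    have "w = c \<cdot>\<^sub>v v" by (rule ker_eq[OF v(1,2) w]) (use c v in auto)
    thus "\<exists>c. w = c \<cdot>\<^sub>v v" by blast
  qed
qed

lemma kd2:
  assumes P: "Phi t yv" and P': "Phi t' yv'" and ab: "a < 3" "b < 3"
    and t: "t a \<noteq> 0" "t b = 0" "t' a = 0" "t' b \<noteq> 0"
  shows "kernel_dim Cm \<ge> 2"
proof -
  from Phi_ker[OF P] obtain v where v: "v \<in> carrier_vec n" "Cm *\<^sub>v v = 0\<^sub>v n"
    "\<forall>k<3. v $ (U k) = t k" by auto
  from Phi_ker[OF P'] obtain w where w: "w \<in> carrier_vec n" "Cm *\<^sub>v w = 0\<^sub>v n"
    "\<forall>k<3. w $ (U k) = t' k" by auto
  show ?thesis
    by (rule kernel_dim_two[OF Cm_carrier v(1,2) w(1,2) U_lt[OF ab(1)] U_lt[OF ab(2)]])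
       (use v w t ab in auto)
qed

lemma k3: "k < 3 \<Longrightarrow> k = 0 \<or> k = 1 \<or> k = (2::nat)" by auto

definition perm3 :: "nat \<Rightarrow> nat \<Rightarrow> nat \<Rightarrow> bool" where
  "perm3 a b c \<longleftrightarrow> a < 3 \<and> b < 3 \<and> c < 3 \<and> a \<noteq> b \<and> b \<noteq> c \<and> a \<noteq> c"

lemma perm3_sum: assumes "perm3 a b c" shows "(f 0 + f 1 + f 2 :: complex) = f a + f b + f c"
proof -
  have h: "a < 3" "b < 3" "c < 3" "a \<noteq> b" "b \<noteq> c" "a \<noteq> c" using assms unfolding perm3_def by auto
  from k3[OF h(1)] k3[OF h(2)] k3[OF h(3)] show ?thesis using h by (elim disjE) (auto simp: algebra_simps)
qed

lemma perm3_cover: assumes "perm3 a b c" "k < 3" shows "k = a \<or> k = b \<or> k = c"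
  using assms k3[of a] k3[of b] k3[of c] k3[of k] unfolding perm3_def by auto

definition r :: "nat \<Rightarrow> nat" where "r k = L k mod 3"

lemma sigtau: assumes "k < 3"
  shows "(r k = 1 \<and> sig k = 0 \<and> tau k * tau k = 1)
       \<or> (r k = 0 \<and> sig k = tau k \<and> sig k * sig k = 1)
       \<or> (r k = 2 \<and> tau k = 0 \<and> sig k * sig k = 1)"
  using sq_cases[OF L1[OF assms]] unfolding r_def sig_def tau_def .

lemma r1: "k < 3 \<Longrightarrow> r k = 1 \<Longrightarrow> sig k = 0 \<and> tau k * tau k = 1" using sigtau by force
lemma r0: "k < 3 \<Longrightarrow> r k = 0 \<Longrightarrow> sig k = tau k \<and> sig k * sig k = 1" using sigtau by force
lemma r2: "k < 3 \<Longrightarrow> r k = 2 \<Longrightarrow> tau k = 0 \<and> sig k * sig k = 1" using sigtau by force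
lemma rn1: "k < 3 \<Longrightarrow> r k \<noteq> 1 \<Longrightarrow> sig k * sig k = 1" using sigtau by force

lemma nz_of_sq1: "(z::complex) * z = 1 \<Longrightarrow> z \<noteq> 0" by auto

lemma Phi_t: assumes "Phi t yv" "k < 3" "sig k * sig k = 1" shows "t k = yv * sig k"
proof -
  have "yv = t k * sig k" using assms unfolding Phi_def by auto
  hence "yv * sig k = t k * (sig k * sig k)" by (simp add: algebra_simps)
  thus ?thesis using assms by simp
qed

lemma caseA:
  assumes p: "perm3 a b c" and ra: "r a = 1" and rb: "r b = 1" and rc: "r c \<noteq> 1"
  shows "kernel_dim Cm = 1"
proof -
  have abc: "a < 3" "b < 3" "c < 3" "a \<noteq> b" "b \<noteq> c" "a \<noteq> c" using p unfolding perm3_def by auto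
  note A = r1[OF abc(1) ra] and B = r1[OF abc(2) rb] and C = rn1[OF abc(3) rc]
  define t0 where "t0 k = (if k = a then tau b else if k = b then - tau a else 0)" for k
  show ?thesis
  proof (rule kd1[of t0 0 a])
    show "Phi t0 0" unfolding Phi_def
    proof (intro conjI allI impI)
      fix k :: nat assume "k < 3"
      thus "0 = t0 k * sig k" using perm3_cover[OF p] A B unfolding t0_def by auto
    next
      show "2 * 0 = t0 0 * tau 0 + t0 1 * tau 1 + t0 2 * tau 2"
        unfolding perm3_sum[OF p, of "\<lambda>k. t0 k * tau k"] using abc unfolding t0_def by simp
    qed
    show "a < 3" by (rule abc)
    show "t0 a \<noteq> 0" unfolding t0_def using B by auto
    fix t yv assume P: "Phi t yv"
    have y0: "yv = 0" using P A abc unfolding Phi_def by auto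
    have tc: "t c = 0" using Phi_t[OF P abc(3) C] y0 by simp
    have "t a * tau a + t b * tau b = 0"
      using P y0 tc unfolding Phi_def perm3_sum[OF p, of "\<lambda>k. t k * tau k"] by simp
    hence "t a * tau a * tau b + t b * (tau b * tau b) = 0" by (metis mult_zero_left distrib_right mult.assoc)
    hence tb: "t b = - (t a * tau b) * tau a" using B by (simp add: algebra_simps add_eq_0_iff)
    have ta: "t a = t a * tau b * tau b" using B by (simp add: mult.assoc)
    show "\<exists>c. yv = c * 0 \<and> (\<forall>k<3. t k = c * t0 k)"
    proof (intro exI[of _ "t a * tau b"] conjI allI impI)
      show "yv = t a * tau b * 0" using y0 by simp
      fix k :: nat assume "k < 3"
      thus "t k = t a * tau b * t0 k" using perm3_cover[OF p] abc ta tb tc unfolding t0_def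
        by (auto simp: algebra_simps)
    qed
  qed
qed

lemma caseB:
  assumes p: "perm3 a b c" and ra: "r a = 2" and rb: "r b = 0" and rc: "r c = 0"
  shows "kernel_dim Cm = 1"
proof -
  have abc: "a < 3" "b < 3" "c < 3" "a \<noteq> b" "b \<noteq> c" "a \<noteq> c" using p unfolding perm3_def by auto
  note A = r2[OF abc(1) ra] and B = r0[OF abc(2) rb] and C = r0[OF abc(3) rc]
  have s1: "sig k * sig k = 1" if "k < 3" for k using rn1[OF that] perm3_cover[OF p that] ra rb rc by auto
  show ?thesis
  proof (rule kd1[of sig 1 a])
    show "Phi sig 1" unfolding Phi_def
    proof (intro conjI allI impI)
      fix k :: nat assume "k < 3"
      thus "1 = sig k * sig k" using s1 by simp
    next
      show "2 * 1 = sig 0 * tau 0 + sig 1 * tau 1 + sig 2 * tau 2"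
      proof -
        have "sig b * tau b = 1" "sig c * tau c = 1" using B C by auto
        thus ?thesis unfolding perm3_sum[OF p, of "\<lambda>k. sig k * tau k"] using A by simp
      qed
    qed
    show "a < 3" by (rule abc)
    show "sig a \<noteq> 0" using A by auto
    fix t yv assume P: "Phi t yv"
    show "\<exists>c. yv = c * 1 \<and> (\<forall>k<3. t k = c * sig k)"
      using Phi_t[OF P _ s1] by auto
  qed
qed

lemma case_all1:
  assumes "r 0 = 1" "r 1 = 1" "r 2 = 1"
  shows "kernel_dim Cm \<ge> 2"
proof -
  note A = r1[of 0] r1[of 1] r1[of 2]
  define t where "t k = (if k = 0 then tau 1 else if k = 1 then - tau 0 else 0)" for k :: nat
  define t' where "t' k = (if k = 1 then tau 2 else if k = 2 then - tau 1 else 0)" for k :: nat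
  show ?thesis
  proof (rule kd2[of t 0 t' 0 0 2])
    show "Phi t 0" unfolding Phi_def t_def using A assms by (auto dest: k3)
    show "Phi t' 0" unfolding Phi_def t'_def using A assms by (auto dest: k3)
  qed (use A assms in \<open>auto simp: t_def t'_def\<close>)
qed

lemma case_one1:
  assumes p: "perm3 a b c" and ra: "r a = 1" and rb: "r b \<noteq> 1" and rc: "r c \<noteq> 1"
  shows "kernel_dim Cm = 0"
proof (rule kd0)
  have abc: "a < 3" "b < 3" "c < 3" using p unfolding perm3_def by auto
  note A = r1[OF abc(1) ra] and B = rn1[OF abc(2) rb] and C = rn1[OF abc(3) rc]
  fix t yv assume P: "Phi t yv"
  have y0: "yv = 0" using P A abc unfolding Phi_def by auto
  have tb: "t b = 0" using Phi_t[OF P abc(2) B] y0 by simp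
  have tc: "t c = 0" using Phi_t[OF P abc(3) C] y0 by simp
  have "t a * tau a = 0" using P y0 tb tc unfolding Phi_def perm3_sum[OF p, of "\<lambda>k. t k * tau k"] by simp
  hence ta: "t a = 0" using A by auto
  show "yv = 0 \<and> (\<forall>k<3. t k = 0)" using y0 ta tb tc perm3_cover[OF p] by auto
qed

lemma case_no1:
  assumes n1: "\<And>k. k < 3 \<Longrightarrow> r k \<noteq> 1"
    and nB: "\<not> ((r 0 = 0 \<and> r 1 = 0 \<and> r 2 = 2) \<or> (r 0 = 0 \<and> r 1 = 2 \<and> r 2 = 0) \<or> (r 0 = 2 \<and> r 1 = 0 \<and> r 2 = 0))"
  shows "kernel_dim Cm = 0"
proof (rule kd0)
  fix t yv assume P: "Phi t yv"
  have tk: "t k = yv * sig k" if "k < 3" for k using Phi_t[OF P that rn1[OF that n1[OF that]]] .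
  have e: "sig k * tau k = (if r k = 0 then 1 else 0)" if "k < 3" for k
    using sigtau[OF that] n1[OF that] by auto
  have rr: "r k = 0 \<or> r k = 2" if "k < 3" for k using n1[OF that] unfolding r_def by auto
  have "2 * yv = yv * (sig 0 * tau 0 + sig 1 * tau 1 + sig 2 * tau 2)"
    using P tk[of 0] tk[of 1] tk[of 2] unfolding Phi_def by (simp add: algebra_simps)
  hence "2 * yv = yv * ((if r 0 = 0 then 1 else 0) + (if r 1 = 0 then 1 else 0) + (if r 2 = 0 then 1 else 0))"
    using e[of 0] e[of 1] e[of 2] by simp
  hence y0: "yv = 0" using rr[of 0] rr[of 1] rr[of 2] nB by (auto split: if_splits)
  show "yv = 0 \<and> (\<forall>k<3. t k = 0)" using y0 tk by auto
qed

definition good :: bool where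
  "good \<longleftrightarrow> (\<exists>a b c. perm3 a b c \<and> ((r a = 1 \<and> r b = 1 \<and> r c \<noteq> 1) \<or> (r a = 2 \<and> r b = 0 \<and> r c = 0)))"

lemma case_no1':
  assumes "r 0 \<noteq> 1" "r 1 \<noteq> 1" "r 2 \<noteq> 1"
    and "\<not> ((r 0 = 0 \<and> r 1 = 0 \<and> r 2 = 2) \<or> (r 0 = 0 \<and> r 1 = 2 \<and> r 2 = 0) \<or> (r 0 = 2 \<and> r 1 = 0 \<and> r 2 = 0))"
  shows "kernel_dim Cm = 0"
  by (rule case_no1) (use assms in \<open>auto dest: k3\<close>)

lemma kdim_iff: "kernel_dim Cm = 1 \<longleftrightarrow> good"
proof
  assume good
  then obtain a b c where p: "perm3 a b c"
    and h: "(r a = 1 \<and> r b = 1 \<and> r c \<noteq> 1) \<or> (r a = 2 \<and> r b = 0 \<and> r c = 0)"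
    unfolding good_def by blast
  from h show "kernel_dim Cm = 1" using caseA[OF p] caseB[OF p] by blast
next
  assume kd: "kernel_dim Cm = 1"
  show good
  proof (rule ccontr)
    assume ng: "\<not> good"
    have A: "perm3 a b c \<Longrightarrow> r a = 1 \<Longrightarrow> r b = 1 \<Longrightarrow> r c \<noteq> 1 \<Longrightarrow> False" for a b c
      using ng unfolding good_def by blast
    have B: "perm3 a b c \<Longrightarrow> r a = 2 \<Longrightarrow> r b = 0 \<Longrightarrow> r c = 0 \<Longrightarrow> False" for a b c
      using ng unfolding good_def by blast
    have p: "perm3 0 1 2" "perm3 0 2 1" "perm3 1 2 0" "perm3 1 0 2" "perm3 2 0 1"
      unfolding perm3_def by auto
    have rl: "r k < 3" for k unfolding r_def by simp
    note facts = case_all1 case_one1[OF p(1)] case_one1[OF p(4)] case_one1[OF p(5)] case_no1'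
      A[OF p(1)] A[OF p(2)] A[OF p(3)] B[OF p(1)] B[OF p(4)] B[OF p(5)]
    from k3[OF rl[of 0]] k3[OF rl[of 1]] k3[OF rl[of 2]] show False
      using kd facts by (elim disjE) simp_all
  qed
qed

lemma U_inj: assumes "a < 3" "b < 3" "U a = U b" shows "a = b"
  using Yinj[OF assms(1,2) L1[OF assms(1)] le_refl L1[OF assms(2)] le_refl] assms(3) unfolding U_def by simp

lemma pend_U: "pendant_vertices n E = {U 0, U 1, U 2}"
  unfolding pend U_def ..

lemma dist_U: "k < 3 \<Longrightarrow> graph_dist E (U k) m = L k"
  unfolding U_def by (rule dist_leg)


lemma good_iff:
  "good \<longleftrightarrow> (\<exists>u1 u2 u3. pendant_vertices n E = {u1, u2, u3} \<and> distinct [u1, u2, u3] \<and>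
      ((graph_dist E u1 m mod 3 = 1 \<and> graph_dist E u2 m mod 3 = 1 \<and> graph_dist E u3 m mod 3 \<noteq> 1)
       \<or> (graph_dist E u1 m mod 3 = 2 \<and> graph_dist E u2 m mod 3 = 0 \<and> graph_dist E u3 m mod 3 = 0)))"
  (is "_ \<longleftrightarrow> (\<exists>u1 u2 u3. ?R u1 u2 u3)")
proof
  assume good
  then obtain a b c where p: "perm3 a b c"
    and h: "(r a = 1 \<and> r b = 1 \<and> r c \<noteq> 1) \<or> (r a = 2 \<and> r b = 0 \<and> r c = 0)"
    unfolding good_def by blast
  have abc: "a < 3" "b < 3" "c < 3" "a \<noteq> b" "b \<noteq> c" "a \<noteq> c" using p unfolding perm3_def by auto
  have seteq: "{U a, U b, U c} = {U 0, U 1, U 2}"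
    using k3[OF abc(1)] k3[OF abc(2)] k3[OF abc(3)] abc(4-6)
    by (elim disjE) (simp_all add: insert_commute)
  have "U a \<noteq> U b" using U_inj[OF abc(1,2)] abc(4) by auto
  moreover have "U b \<noteq> U c" using U_inj[OF abc(2,3)] abc(5) by auto
  moreover have "U a \<noteq> U c" using U_inj[OF abc(1,3)] abc(6) by auto
  ultimately have dist: "distinct [U a, U b, U c]" by simp
  have d: "graph_dist E (U a) m mod 3 = r a" "graph_dist E (U b) m mod 3 = r b" "graph_dist E (U c) m mod 3 = r c"
    using dist_U[OF abc(1)] dist_U[OF abc(2)] dist_U[OF abc(3)] unfolding r_def by simp_all
  have "?R (U a) (U b) (U c)" unfolding d pend_U seteq using dist h by simp
  thus "\<exists>u1 u2 u3. ?R u1 u2 u3" by (intro exI)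
next
  assume "\<exists>u1 u2 u3. ?R u1 u2 u3"
  then obtain u1 u2 u3 where R: "?R u1 u2 u3" by (elim exE)
  have Pe: "pendant_vertices n E = {u1, u2, u3}" using R by (rule conjunct1)
  have D: "distinct [u1, u2, u3]" using R by (rule conjunct1[OF conjunct2])
  note C = conjunct2[OF conjunct2[OF R]]
  have eq: "{u1, u2, u3} = {U 0, U 1, U 2}" using Pe pend_U by simp
  have ex: "\<exists>a<3. u = U a" if "u \<in> {u1, u2, u3}" for u
  proof -
    have "u = U 0 \<or> u = U 1 \<or> u = U 2" using that eq by simp
    thus ?thesis
    proof (elim disjE)
      assume "u = U 0" thus ?thesis by (intro exI[of _ 0]) simp
    next
      assume "u = U 1" thus ?thesis by (intro exI[of _ 1]) simp
    next
      assume "u = U 2" thus ?thesis by (intro exI[of _ 2]) simp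
    qed
  qed
  obtain a where a: "a < 3" "u1 = U a" using ex[of u1] by auto
  obtain b where b: "b < 3" "u2 = U b" using ex[of u2] by auto
  obtain c where c: "c < 3" "u3 = U c" using ex[of u3] by auto
  have p: "perm3 a b c" using D a b c unfolding perm3_def by auto
  have d: "graph_dist E u1 m mod 3 = r a" "graph_dist E u2 m mod 3 = r b" "graph_dist E u3 m mod 3 = r c"
    using dist_U[OF a(1)] dist_U[OF b(1)] dist_U[OF c(1)] a b c unfolding r_def by simp_all
  have C': "(r a = 1 \<and> r b = 1 \<and> r c \<noteq> 1) \<or> (r a = 2 \<and> r b = 0 \<and> r c = 0)"
    using C unfolding d .
  show good unfolding good_def using p C' by (intro exI[of _ a] exI[of _ b] exI[of _ c]) simp
qed

end


theorem mainTheorem10: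
  fixes n :: nat and E :: "nat \<Rightarrow> nat \<Rightarrow> bool" and m :: nat
  assumes "is_tree n E"
    and "card (pendant_vertices n E) = 3"
    and "major_vertices n E = {m}"
  shows "eig_multiplicity (laplacian n E) 1 = 1 \<longleftrightarrow>
    (\<exists>u1 u2 u3. pendant_vertices n E = {u1, u2, u3} \<and> distinct [u1, u2, u3] \<and>
      ((graph_dist E u1 m mod 3 = 1 \<and> graph_dist E u2 m mod 3 = 1 \<and> graph_dist E u3 m mod 3 \<noteq> 1)
       \<or> (graph_dist E u1 m mod 3 = 2 \<and> graph_dist E u2 m mod 3 = 0 \<and> graph_dist E u3 m mod 3 = 0)))"
proof -
  have tr: "simple_graph n E" "connected_graph n E" "\<not> has_cycle E"
    using assms(1) unfolding is_tree_def by auto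
  have mM: "m \<in> major_vertices n E" using assms(3) by simp
  hence mn: "m < n" and dm: "degree n E m \<ge> 3" unfolding major_vertices_def by auto
  have dle: "degree n E v \<le> 2" if "v < n" "v \<noteq> m" for v
  proof -
    have "v \<notin> major_vertices n E" using assms(3) that by auto
    thus ?thesis using that unfolding major_vertices_def by auto
  qed
  interpret T: tctx n E m
    by (unfold_locales) (use tr mn dm dle in auto)
  obtain Y L where sp: "spider n E m Y L" using T.spider_ex[OF assms(2)] by blast
  interpret S: spider n E m Y L by (rule sp)
  have lc: "laplacian n E \<in> carrier_mat n n" unfolding laplacian_def by simp
  have sym: "laplacian n E $$ (i, j) = laplacian n E $$ (j, i)" if "i < n" "j < n" for i j
  proof -
    have "E i j = E j i" using S.Esym by blast
    thus ?thesis using that unfolding laplacian_def by auto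
  qed
  have "eig_multiplicity (laplacian n E) 1 = kernel_dim S.Cm"
    unfolding eig_multiplicity_def S.Cm_def using order_char_poly_real_sym[OF lc sym, of 1] by simp
  thus ?thesis using S.kdim_iff S.good_iff by simp
qed

end
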